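(* Let $G=(V,E)$ be a finite, simple, undirected graph with $m=|E|\ge 1$ edges, and let $\mathcal{C}_1,\mathcal{C}_2\subseteq V$ be disjoint nonempty sets with $2m_i^{(1)}+m_e^{(1)}>0$ and $2m_i^{(2)}+m_e^{(2)}>0$, where $m_i^{(j)}$ is the number of edges with both endpoints in $\mathcal{C}_j$ and $m_e^{(j)}$ is the number of edges with exactly one endpoint in $\mathcal{C}_j$ (including edges to the other set). Let $m_e^{(12)}$ be the number of edges with one endpoint in $\mathcal{C}_1$ and the other in $\mathcal{C}_2$, and let $\mathcal{C}=\mathcal{C}_1\cup\mathcal{C}_2$. Then $\Delta\mathcal{P}^{\star}:=\mathcal{P}^{\star}_{\mathcal{C}}-\left(\mathcal{P}^{\star}_{\mathcal{C}_1}+\mathcal{P}^{\star}_{\mathcal{C}_2}\right)>0$ if and only if $$m_e^{(12)}>\frac{2m_i^{(2)}+m_e^{(2)}}{2m_i^{(1)}+m_e^{(1)}}\,m_i^{(1)}+\frac{2m_i^{(1)}+m_e^{(1)}}{2m_i^{(2)}+m_e^{(2)}}\,m_i^{(2)}.$$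
   Context: For a subset $\mathcal{D}\subseteq V$, let $m_i(\mathcal{D})$ be the number of edges with both endpoints in $\mathcal{D}$ and $m_e(\mathcal{D})$ the number of edges with exactly one endpoint in $\mathcal{D}$. The null-adjusted persistence of $\mathcal{D}$ is $\mathcal{P}^{\star}_{\mathcal{D}}=\frac{2m_i(\mathcal{D})}{2m_i(\mathcal{D})+m_e(\mathcal{D})}-\frac{2m_i(\mathcal{D})+m_e(\mathcal{D})}{2m}$, where $m=|E|$. *)

theory Defs
  imports Main "HOL-Library.Disjoint_Sets" Complex_Main
begin

definition simple_graph :: "'a set \<Rightarrow> 'a set set \<Rightarrow> bool" where
  "simple_graph V E \<longleftrightarrow> finite V \<and> (\<forall>e\<in>E. e \<subseteq> V \<and> card e = 2)"

definition m_int :: "'a set set \<Rightarrow> 'a set \<Rightarrow> nat" where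
  "m_int E D = card {e \<in> E. e \<subseteq> D}"

definition m_ext :: "'a set set \<Rightarrow> 'a set \<Rightarrow> nat" where
  "m_ext E D = card {e \<in> E. card (e \<inter> D) = 1}"

definition m_cross :: "'a set set \<Rightarrow> 'a set \<Rightarrow> 'a set \<Rightarrow> nat" where
  "m_cross E A B = card {e \<in> E. e \<inter> A \<noteq> {} \<and> e \<inter> B \<noteq> {}}"

definition persistence :: "'a set set \<Rightarrow> 'a set \<Rightarrow> real" where
  "persistence E D =
     2 * real (m_int E D) / (2 * real (m_int E D) + real (m_ext E D))
     - (2 * real (m_int E D) + real (m_ext E D)) / (2 * real (card E))"

end

theory Submission
  imports Defs
begin

lemma card_pair_inter1:
  assumes "u \<noteq> v"
  shows "card ({u,v} \<inter> D) = 1 \<longleftrightarrow> (u \<in> D \<longleftrightarrow> v \<notin> D)"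
  using assms by (cases "u \<in> D"; cases "v \<in> D") auto

lemma card_pair_inter2:
  assumes "u \<noteq> v"
  shows "card ({u,v} \<inter> D) = (if u \<in> D then 1 else 0) + (if v \<in> D then 1 else 0)"
  using assms by (cases "u \<in> D"; cases "v \<in> D") auto

lemma edge_pair:
  assumes "simple_graph V E" "e \<in> E"
  obtains u v where "e = {u,v}" "u \<noteq> v"
  using assms unfolding simple_graph_def by (meson card_2_iff)

lemma ineq_helper:
  fixes K L a1 a2 x A B :: real assumes KL: "K>0" "L>0"
  and e1: "A = 2*(x*K*L - a1*L*L - a2*K*K)/((K+L)*K*L)"
  and e2: "B = (a1*L*L + a2*K*K)/(K*L)"
  shows "A > 0 \<longleftrightarrow> x > B"
proof -
  have D: "(K+L)*K*L > 0" "K*L > 0" using KL by simp_all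
  have "A > 0 \<longleftrightarrow> x*K*L - a1*L*L - a2*K*K > 0" unfolding e1 using D by (simp add: zero_less_divide_iff) linarith
  also have "\<dots> \<longleftrightarrow> a1*L*L + a2*K*K < x*(K*L)" by (simp add: algebra_simps)
  also have "\<dots> \<longleftrightarrow> x > B" unfolding e2 using D by (simp add: divide_less_eq)
  finally show ?thesis .
qed

theorem proposition5:
  fixes V :: "'a set" and E :: "'a set set" and C1 C2 :: "'a set"
  assumes "simple_graph V E"
    and "card E \<ge> 1"
    and "C1 \<subseteq> V" and "C2 \<subseteq> V"
    and "C1 \<inter> C2 = {}"
    and "C1 \<noteq> {}" and "C2 \<noteq> {}"
    and "2 * m_int E C1 + m_ext E C1 > 0"
    and "2 * m_int E C2 + m_ext E C2 > 0"
  shows "persistence E (C1 \<union> C2) - (persistence E C1 + persistence E C2) > 0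
    \<longleftrightarrow> real (m_cross E C1 C2) >
        (2 * real (m_int E C2) + real (m_ext E C2)) / (2 * real (m_int E C1) + real (m_ext E C1))
          * real (m_int E C1)
      + (2 * real (m_int E C1) + real (m_ext E C1)) / (2 * real (m_int E C2) + real (m_ext E C2))
          * real (m_int E C2)"
proof -
  have finE: "finite E" using assms(2) card.infinite by fastforce
  define I1 where "I1 = {e \<in> E. e \<subseteq> C1}"
  define I2 where "I2 = {e \<in> E. e \<subseteq> C2}"
  define X where "X = {e \<in> E. e \<inter> C1 \<noteq> {} \<and> e \<inter> C2 \<noteq> {}}"
  define Y1 where "Y1 = {e \<in> E. card (e \<inter> C1) = 1 \<and> e \<inter> C2 = {}}"
  define Y2 where "Y2 = {e \<in> E. card (e \<inter> C2) = 1 \<and> e \<inter> C1 = {}}"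
  have fin: "finite I1" "finite I2" "finite X" "finite Y1" "finite Y2"
    using finE unfolding I1_def I2_def X_def Y1_def Y2_def by auto
  have e1: "{e \<in> E. e \<subseteq> C1 \<union> C2} = I1 \<union> I2 \<union> X"
  proof (rule set_eqI)
    fix e show "e \<in> {e \<in> E. e \<subseteq> C1 \<union> C2} \<longleftrightarrow> e \<in> I1 \<union> I2 \<union> X"
    proof (cases "e \<in> E")
      case True
      then obtain u v where uv: "e = {u,v}" "u \<noteq> v" using edge_pair[OF assms(1)] by blast
      show ?thesis unfolding I1_def I2_def X_def using uv True assms(5) by auto
    qed (auto simp: I1_def I2_def X_def)
  qed
  have d1: "I1 \<inter> I2 = {}" "(I1 \<union> I2) \<inter> X = {}"
  proof -
    have ne: "e \<noteq> {}" if "e \<in> E" for e using edge_pair[OF assms(1) that] by blast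
    show "I1 \<inter> I2 = {}" using ne assms(5) unfolding I1_def I2_def by blast
    show "(I1 \<union> I2) \<inter> X = {}" using assms(5) unfolding I1_def I2_def X_def by blast
  qed
  have mi: "m_int E (C1 \<union> C2) = card I1 + card I2 + card X"
    unfolding m_int_def e1 using fin d1 by (simp add: card_Un_disjoint)
  have x1: "{e \<in> E. card (e \<inter> C1) = 1} = X \<union> Y1"
  proof (rule set_eqI)
    fix e show "e \<in> {e \<in> E. card (e \<inter> C1) = 1} \<longleftrightarrow> e \<in> X \<union> Y1"
    proof (cases "e \<in> E")
      case True
      then obtain u v where uv: "e = {u,v}" "u \<noteq> v" using edge_pair[OF assms(1)] by blast
      show ?thesis unfolding X_def Y1_def using uv True assms(5)
        by (auto simp: card_pair_inter2)
    qed (auto simp: X_def Y1_def)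
  qed
  have x2: "{e \<in> E. card (e \<inter> C2) = 1} = X \<union> Y2"
  proof (rule set_eqI)
    fix e show "e \<in> {e \<in> E. card (e \<inter> C2) = 1} \<longleftrightarrow> e \<in> X \<union> Y2"
    proof (cases "e \<in> E")
      case True
      then obtain u v where uv: "e = {u,v}" "u \<noteq> v" using edge_pair[OF assms(1)] by blast
      show ?thesis unfolding X_def Y2_def using uv True assms(5)
        by (auto simp: card_pair_inter2)
    qed (auto simp: X_def Y2_def)
  qed
  have x3: "{e \<in> E. card (e \<inter> (C1 \<union> C2)) = 1} = Y1 \<union> Y2"
  proof (rule set_eqI)
    fix e show "e \<in> {e \<in> E. card (e \<inter> (C1 \<union> C2)) = 1} \<longleftrightarrow> e \<in> Y1 \<union> Y2"
    proof (cases "e \<in> E")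
      case True
      then obtain u v where uv: "e = {u,v}" "u \<noteq> v" using edge_pair[OF assms(1)] by blast
      show ?thesis unfolding Y1_def Y2_def using uv True assms(5)
        by (auto simp: card_pair_inter2)
    qed (auto simp: Y1_def Y2_def)
  qed
  have d2: "X \<inter> Y1 = {}" "X \<inter> Y2 = {}" "Y1 \<inter> Y2 = {}"
    unfolding X_def Y1_def Y2_def by auto
  have me1: "m_ext E C1 = card X + card Y1"
    unfolding m_ext_def x1 using fin d2 by (simp add: card_Un_disjoint)
  have me2: "m_ext E C2 = card X + card Y2"
    unfolding m_ext_def x2 using fin d2 by (simp add: card_Un_disjoint)
  have me: "m_ext E (C1 \<union> C2) = card Y1 + card Y2"
    unfolding m_ext_def x3 using fin d2 by (simp add: card_Un_disjoint)
  have mc: "m_cross E C1 C2 = card X" unfolding m_cross_def X_def ..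
  have i1: "m_int E C1 = card I1" unfolding m_int_def I1_def ..
  have i2: "m_int E C2 = card I2" unfolding m_int_def I2_def ..
  define a1 where "a1 = real (card I1)"
  define a2 where "a2 = real (card I2)"
  define x where "x = real (card X)"
  define y1 where "y1 = real (card Y1)"
  define y2 where "y2 = real (card Y2)"
  define M where "M = real (card E)"
  have K1: "2*a1 + x + y1 > 0" using assms(8) unfolding a1_def x_def y1_def i1 me1 by linarith
  have K2: "2*a2 + x + y2 > 0" using assms(9) unfolding a2_def x_def y2_def i2 me2 by linarith
  have M: "M > 0" using assms(2) unfolding M_def by simp
  have nn: "a1 \<ge> 0" "a2 \<ge> 0" "x \<ge> 0" "y1 \<ge> 0" "y2 \<ge> 0" unfolding a1_def a2_def x_def y1_def y2_def by auto
  have lhs: "persistence E (C1 \<union> C2) - (persistence E C1 + persistence E C2)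
     = 2*(a1+a2+x)/((2*a1+x+y1) + (2*a2+x+y2)) - 2*a1/(2*a1+x+y1) - 2*a2/(2*a2+x+y2)"
    unfolding persistence_def mi me me1 me2 i1 i2
    by (simp add: a1_def a2_def x_def y1_def y2_def M_def[symmetric] add_divide_distrib[symmetric] algebra_simps)
  define K where "K = 2*a1+x+y1"
  define L where "L = 2*a2+x+y2"
  have KL: "K > 0" "L > 0" "K + L > 0" using K1 K2 K_def L_def by auto
  have key: "2*(a1+a2+x)/(K+L) - 2*a1/K - 2*a2/L > 0 \<longleftrightarrow> x > L/K*a1 + K/L*a2"
  proof -
    have "2*(a1+a2+x)/(K+L) - 2*a1/K - 2*a2/L = 2*(x*K*L - a1*L*L - a2*K*K)/((K+L)*K*L)"
    proof -
      have nz: "K \<noteq> 0" "L \<noteq> 0" "K+L \<noteq> 0" using KL by auto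
      show ?thesis using nz by (simp add: divide_simps) (simp add: algebra_simps)
    qed
    moreover have "L/K*a1 + K/L*a2 = (a1*L*L + a2*K*K)/(K*L)" using KL by (simp add: field_simps)
    ultimately show ?thesis using ineq_helper[OF KL(1,2)] by blast
  qed
  have r1: "2 * real (m_int E C1) + real (m_ext E C1) = K" unfolding K_def i1 me1 a1_def x_def y1_def by simp
  have r2: "2 * real (m_int E C2) + real (m_ext E C2) = L" unfolding L_def i2 me2 a2_def x_def y2_def by simp
  have lhs2: "persistence E (C1 \<union> C2) - (persistence E C1 + persistence E C2)
     = 2*(a1+a2+x)/(K+L) - 2*a1/K - 2*a2/L" unfolding lhs K_def L_def ..
  show ?thesis unfolding lhs2 unfolding r1 r2 unfolding mc i1 i2 using key unfolding a1_def a2_def x_def .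
qed

end
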